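(* For every finite zero-set $\mathcal Z$ there exists a time $T_{\max}=T_{\max}(\mathcal Z)$ such that for every set $A\subseteq\mathbb Z_+^2$ (not necessarily finite), $\mathcal T^{T_{\max}+1}(A)=\mathcal T^{T_{\max}}(A)$.
   Context: $\mathbb Z_+=\{0,1,2,\dots\}$, $R_{a,b}=([0,a-1]\times[0,b-1])\cap\mathbb Z_+^2$; a zero-set is a set $\mathcal Z\subseteq\mathbb Z_+^2$ that is a union of such rectangles. For $A\subseteq\mathbb Z_+^2$ and $x\in\mathbb Z_+^2$, $\mathrm{row}(x,A)$ (resp. $\mathrm{col}(x,A)$) is the (possibly infinite) number of points of $A$ on the horizontal (resp. vertical) line through $x$, and $\mathcal T(A)=A\cup\{x\notin A:(\mathrm{row}(x,A),\mathrm{col}(x,A))\notin\mathcal Z\}$ (a pair with an infinite coordinate is never in $\mathcal Z$). *)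

theory Defs
  imports Main "HOL-Library.Extended_Nat"
begin

type_synonym point = "nat \<times> nat"

definition rect :: "nat \<Rightarrow> nat \<Rightarrow> point set" where
  "rect a b = {(i, j). i < a \<and> j < b}"

definition zero_set :: "point set \<Rightarrow> bool" where
  "zero_set Z \<longleftrightarrow> (\<exists>S. Z = (\<Union>(a, b)\<in>S. rect a b))"

definition ecount :: "'a set \<Rightarrow> enat" where
  "ecount S = (if finite S then enat (card S) else \<infinity>)"

definition row :: "point \<Rightarrow> point set \<Rightarrow> enat" where
  "row x A = ecount {y \<in> A. snd y = snd x}"

definition col :: "point \<Rightarrow> point set \<Rightarrow> enat" where
  "col x A = ecount {y \<in> A. fst y = fst x}"

text \<open>A pair with an infinite coordinate is never in Z.\<close>
definition in_zero :: "point set \<Rightarrow> enat \<Rightarrow> enat \<Rightarrow> bool" where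
  "in_zero Z r c \<longleftrightarrow> (\<exists>a b. r = enat a \<and> c = enat b \<and> (a, b) \<in> Z)"

definition T_step :: "point set \<Rightarrow> point set \<Rightarrow> point set" where
  "T_step Z A = A \<union> {x. x \<notin> A \<and> \<not> in_zero Z (row x A) (col x A)}"

end

theory Submission
  imports Defs
begin

definition rowc :: "point set \<Rightarrow> nat \<Rightarrow> enat" where
  "rowc A j = ecount {y \<in> A. snd y = j}"
definition colc :: "point set \<Rightarrow> nat \<Rightarrow> enat" where
  "colc A i = ecount {y \<in> A. fst y = i}"

lemma ecount_mono: "S \<subseteq> S' \<Longrightarrow> ecount S \<le> ecount S'"
proof -
  assume a: "S \<subseteq> S'"
  show ?thesis
  proof (cases "finite S'")
    case True
    hence "finite S" using a finite_subset by blast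
    thus ?thesis using True a card_mono[OF True a] unfolding ecount_def by simp
  qed (simp add: ecount_def)
qed

lemma ecount_less: "ecount S < enat m \<Longrightarrow> finite S \<and> card S < m"
  unfolding ecount_def by (auto split: if_splits)

lemma ecount_ge: "finite S0 \<Longrightarrow> S0 \<subseteq> S \<Longrightarrow> m \<le> card S0 \<Longrightarrow> enat m \<le> ecount S"
  unfolding ecount_def using card_mono[of S S0] by (auto intro: order_trans)

lemma ecount_inf: "infinite S \<Longrightarrow> ecount S = \<infinity>"
  unfolding ecount_def by auto

lemma T_mem: "x \<in> T_step Z A \<longleftrightarrow> x \<in> A \<or> \<not> in_zero Z (rowc A (snd x)) (colc A (fst x))"
  unfolding T_step_def row_def col_def rowc_def colc_def by auto

lemma T_sub: "A \<subseteq> T_step Z A"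
  unfolding T_step_def by auto

lemma rowc_mono: "A \<subseteq> A' \<Longrightarrow> rowc A j \<le> rowc A' j"
  unfolding rowc_def by (rule ecount_mono) auto
lemma colc_mono: "A \<subseteq> A' \<Longrightarrow> colc A j \<le> colc A' j"
  unfolding colc_def by (rule ecount_mono) auto

locale ctx =
  fixes Z :: "point set" and m :: nat
  assumes down: "(a, b) \<in> Z \<Longrightarrow> a' \<le> a \<Longrightarrow> b' \<le> b \<Longrightarrow> (a', b') \<in> Z"
    and bnd: "(a, b) \<in> Z \<Longrightarrow> a < m \<and> b < m"
begin

lemma iz_bound: "in_zero Z r c \<Longrightarrow> r < enat m \<and> c < enat m"
  unfolding in_zero_def using bnd by auto

lemma iz_ge: "enat m \<le> r \<Longrightarrow> \<not> in_zero Z r c" "enat m \<le> c \<Longrightarrow> \<not> in_zero Z r c"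
  using iz_bound by (auto simp: not_less[symmetric])

lemma iz_down: "in_zero Z r c \<Longrightarrow> r' \<le> r \<Longrightarrow> c' \<le> c \<Longrightarrow> in_zero Z r' c'"
proof -
  assume "in_zero Z r c" "r' \<le> r" "c' \<le> c"
  then obtain a b where ab: "r = enat a" "c = enat b" "(a, b) \<in> Z" unfolding in_zero_def by auto
  from \<open>r' \<le> r\<close> ab obtain a' where "r' = enat a'" "a' \<le> a"
    by (cases r') auto
  moreover from \<open>c' \<le> c\<close> ab obtain b' where "c' = enat b'" "b' \<le> b"
    by (cases c') auto
  ultimately show "in_zero Z r' c'" unfolding in_zero_def using down ab by blast
qed

definition SR :: "point set \<Rightarrow> nat set" where "SR A = {j. enat m \<le> rowc A j}"
definition SC :: "point set \<Rightarrow> nat set" where "SC A = {i. enat m \<le> colc A i}"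
definition FR :: "point set \<Rightarrow> nat set" where "FR A = {j. \<forall>i. (i, j) \<in> A}"
definition FC :: "point set \<Rightarrow> nat set" where "FC A = {i. \<forall>j. (i, j) \<in> A}"
definition small where
  "small A \<longleftrightarrow> finite (SR A) \<and> card (SR A) < m \<and> finite (SC A) \<and> card (SC A) < m"
definition L2 where "L2 A \<longleftrightarrow> (\<forall>i. enat m \<le> colc A i) \<or> (\<forall>j. enat m \<le> rowc A j)"
definition c1 where "c1 A = card (SR A) + card (FR A) + card (SC A) + card (FC A)"
definition MR where "MR A = Max (insert 0 {n. \<exists>j. rowc A j = enat n \<and> n < m})"
definition MC where "MC A = Max (insert 0 {n. \<exists>i. colc A i = enat n \<and> n < m})"
definition WW where "WW A = {i. colc A i < enat m \<and> \<not> in_zero Z (enat (MR A)) (colc A i)}"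
definition VV where "VV A = {j. rowc A j < enat m \<and> \<not> in_zero Z (rowc A j) (enat (MC A))}"
definition good where
  "good A \<longleftrightarrow> finite (VV A) \<and> finite (WW A) \<and> card (VV A) < m \<and> card (WW A) < m"
definition c2 where "c2 A = (if good A then card (VV A) + card (WW A) else 2 * m)"
definition c3 where "c3 A = (if good A then card (A \<inter> (WW A \<times> VV A)) else 0)"
definition K3 where "K3 = m * m + 1"
definition K1 where "K1 = (2 * m + 1) * K3"
definition BB where "BB = (4 * m + 1) * K1"
definition Phi0 where "Phi0 A = c1 A * K1 + (c2 A * K3 + c3 A)"
definition Phi where
  "Phi A = (if A = UNIV then BB + 2 else if L2 A then BB + 1 else if \<not> small A then BB else Phi0 A)"

lemma FR_SR: "FR A \<subseteq> SR A"
proof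
  fix j assume "j \<in> FR A"
  hence "range (\<lambda>i. (i, j)) \<subseteq> {y \<in> A. snd y = j}" unfolding FR_def by auto
  moreover have "infinite (range (\<lambda>i::nat. (i, j)))"
    by (rule range_inj_infinite) (auto simp: inj_def)
  ultimately have "infinite {y \<in> A. snd y = j}" using finite_subset by blast
  thus "j \<in> SR A" unfolding SR_def rowc_def by (simp add: ecount_inf)
qed

lemma FC_SC: "FC A \<subseteq> SC A"
proof
  fix i assume "i \<in> FC A"
  hence "range (\<lambda>j. (i, j)) \<subseteq> {y \<in> A. fst y = i}" unfolding FC_def by auto
  moreover have "infinite (range (\<lambda>j::nat. (i, j)))"
    by (rule range_inj_infinite) (auto simp: inj_def)
  ultimately have "infinite {y \<in> A. fst y = i}" using finite_subset by blast
  thus "i \<in> SC A" unfolding SC_def colc_def by (simp add: ecount_inf)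
qed

lemma SR_mono: "A \<subseteq> A' \<Longrightarrow> SR A \<subseteq> SR A'"
  unfolding SR_def using rowc_mono order_trans by blast
lemma SC_mono: "A \<subseteq> A' \<Longrightarrow> SC A \<subseteq> SC A'"
  unfolding SC_def using colc_mono order_trans by blast
lemma FR_mono: "A \<subseteq> A' \<Longrightarrow> FR A \<subseteq> FR A'"
  unfolding FR_def by auto
lemma FC_mono: "A \<subseteq> A' \<Longrightarrow> FC A \<subseteq> FC A'"
  unfolding FC_def by auto

lemma SR_T: "j \<in> SR A \<Longrightarrow> (i, j) \<in> T_step Z A"
  unfolding SR_def using T_mem iz_ge by auto
lemma SC_T: "i \<in> SC A \<Longrightarrow> (i, j) \<in> T_step Z A"
  unfolding SC_def using T_mem iz_ge by auto

lemma L2_T: "L2 A \<Longrightarrow> T_step Z A = UNIV"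
proof -
  assume "L2 A"
  hence "\<And>x. \<not> in_zero Z (rowc A (snd x)) (colc A (fst x))" using iz_ge unfolding L2_def by blast
  thus ?thesis by (auto simp: T_mem)
qed

lemma big_set:
  assumes "\<not> (finite S \<and> card S < m)"
  obtains S0 where "S0 \<subseteq> S" "finite S0" "card S0 = m"
proof (cases "finite S")
  case True
  hence "m \<le> card S" using assms by simp
  then obtain T where "T \<subseteq> S" "card T = m" "finite T" by (rule obtain_subset_with_card_n)
  thus ?thesis using that by simp
next
  case False
  then obtain T where "finite T" "card T = m" "T \<subseteq> S" using infinite_arbitrarily_large[of S m] by blast
  thus ?thesis using that by simp
qed

lemma NS_T: assumes "\<not> small A" shows "L2 (T_step Z A)"
proof -
  have "\<not> (finite (SR A) \<and> card (SR A) < m) \<or> \<not> (finite (SC A) \<and> card (SC A) < m)"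
    using assms unfolding small_def by auto
  thus ?thesis
  proof
    assume "\<not> (finite (SR A) \<and> card (SR A) < m)"
    then obtain S0 where S0: "S0 \<subseteq> SR A" "finite S0" "card S0 = m" by (rule big_set)
    have "enat m \<le> colc (T_step Z A) i" for i
    proof -
      have "(\<lambda>j. (i, j)) ` S0 \<subseteq> {y \<in> T_step Z A. fst y = i}" using S0 SR_T by auto
      moreover have "card ((\<lambda>j. (i, j)) ` S0) = m" using S0 by (simp add: card_image inj_on_def)
      ultimately show ?thesis unfolding colc_def
        using ecount_ge[OF finite_imageI[OF S0(2)], of "\<lambda>j. (i, j)"] by simp
    qed
    thus ?thesis unfolding L2_def by auto
  next
    assume "\<not> (finite (SC A) \<and> card (SC A) < m)"
    then obtain S0 where S0: "S0 \<subseteq> SC A" "finite S0" "card S0 = m" by (rule big_set)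
    have "enat m \<le> rowc (T_step Z A) j" for j
    proof -
      have "(\<lambda>i. (i, j)) ` S0 \<subseteq> {y \<in> T_step Z A. snd y = j}" using S0 SC_T by auto
      moreover have "card ((\<lambda>i. (i, j)) ` S0) = m" using S0 by (simp add: card_image inj_on_def)
      ultimately show ?thesis unfolding rowc_def
        using ecount_ge[OF finite_imageI[OF S0(2)], of "\<lambda>i. (i, j)"] by simp
    qed
    thus ?thesis unfolding L2_def by auto
  qed
qed

lemma c2_le: "c2 A \<le> 2 * m"
  unfolding c2_def good_def by auto

lemma c3_less: "c3 A < K3"
proof (cases "good A")
  case True
  hence "card (A \<inter> (WW A \<times> VV A)) \<le> card (WW A \<times> VV A)"
    unfolding good_def by (intro card_mono) auto
  also have "\<dots> = card (WW A) * card (VV A)" by (simp add: card_cartesian_product)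
  also have "\<dots> \<le> m * m" using True unfolding good_def by (intro mult_mono) auto
  finally show ?thesis unfolding c3_def K3_def using True by simp
qed (simp add: c3_def K3_def)

lemma inner_less: "c2 A * K3 + c3 A < K1"
proof -
  have "c2 A * K3 + c3 A < c2 A * K3 + K3" using c3_less by simp
  also have "\<dots> = (c2 A + 1) * K3" by simp
  also have "\<dots> \<le> (2 * m + 1) * K3" using c2_le by (intro mult_right_mono) auto
  finally show ?thesis unfolding K1_def .
qed

lemma c1_small: "small A \<Longrightarrow> c1 A < 4 * m"
proof -
  assume s: "small A"
  have "card (FR A) \<le> card (SR A)" using s FR_SR unfolding small_def by (intro card_mono) auto
  moreover have "card (FC A) \<le> card (SC A)" using s FC_SC unfolding small_def by (intro card_mono) auto
  ultimately show ?thesis using s unfolding small_def c1_def by linarith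
qed

lemma Phi0_less: "small A \<Longrightarrow> Phi0 A < BB"
proof -
  assume s: "small A"
  have "Phi0 A < c1 A * K1 + K1" unfolding Phi0_def using inner_less by simp
  also have "\<dots> = (c1 A + 1) * K1" by simp
  also have "\<dots> \<le> (4 * m + 1) * K1" using c1_small[OF s] by (intro mult_right_mono) auto
  finally show ?thesis unfolding BB_def .
qed

lemma Phi_le: "Phi A \<le> BB + 2"
  unfolding Phi_def using Phi0_less[of A] by (auto simp del: Phi0_def)

lemma lex:
  assumes "a < a' \<or> (a = a' \<and> (b < b' \<or> (b = b' \<and> c < (c'::nat))))"
    and "b * K3 + c < K1" "b' * K3 + c' < K1" "c < K3" "c' < K3"
  shows "a * K1 + (b * K3 + c) < a' * K1 + (b' * K3 + c')"
proof -
  consider "a < a'" | "a = a'" "b < b'" | "a = a'" "b = b'" "c < c'" using assms by auto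
  then show ?thesis
  proof cases
    case 1
    have "a * K1 + (b * K3 + c) < a * K1 + K1" using assms by simp
    also have "\<dots> = (a + 1) * K1" by simp
    also have "\<dots> \<le> a' * K1" using 1 by (intro mult_right_mono) auto
    finally show ?thesis by simp
  next
    case 2
    have "b * K3 + c < b * K3 + K3" using assms by simp
    also have "\<dots> = (b + 1) * K3" by simp
    also have "\<dots> \<le> b' * K3" using 2 by (intro mult_right_mono) auto
    finally show ?thesis using 2 by simp
  qed simp
qed

lemma MR_fin: "finite (insert 0 {n. \<exists>j. rowc A j = enat n \<and> n < m})"
  by (rule finite_subset[of _ "{..m}"]) auto
lemma MC_fin: "finite (insert 0 {n. \<exists>i. colc A i = enat n \<and> n < m})"
  by (rule finite_subset[of _ "{..m}"]) auto

lemma MR_ge: "rowc A j = enat r \<Longrightarrow> r < m \<Longrightarrow> r \<le> MR A"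
  unfolding MR_def using MR_fin by (intro Max_ge) auto
lemma MC_ge: "colc A i = enat r \<Longrightarrow> r < m \<Longrightarrow> r \<le> MC A"
  unfolding MC_def using MC_fin by (intro Max_ge) auto

lemma MR_att: assumes "rowc A j = enat r" "r < m"
  shows "\<exists>j0. rowc A j0 = enat (MR A) \<and> MR A < m"
proof -
  let ?S = "{n. \<exists>j. rowc A j = enat n \<and> n < m}"
  have "MR A \<in> insert 0 ?S" unfolding MR_def using MR_fin by (intro Max_in) auto
  moreover have "r \<le> MR A" using MR_ge assms .
  ultimately show ?thesis using assms by auto
qed
lemma MC_att: assumes "colc A i = enat r" "r < m"
  shows "\<exists>i0. colc A i0 = enat (MC A) \<and> MC A < m"
proof -
  let ?S = "{n. \<exists>i. colc A i = enat n \<and> n < m}"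
  have "MC A \<in> insert 0 ?S" unfolding MC_def using MC_fin by (intro Max_in) auto
  moreover have "r \<le> MC A" using MC_ge assms .
  ultimately show ?thesis using assms by auto
qed

lemma MR_mono: assumes "A \<subseteq> A'" "SR A' = SR A" shows "MR A \<le> MR A'"
proof -
  have le: "a \<le> MR A'" if a: "a \<in> insert 0 {n. \<exists>j. rowc A j = enat n \<and> n < m}" for a
  proof (cases "a = 0")
    case False
    then obtain j where 2: "rowc A j = enat a" "a < m" using a by blast
    hence "j \<notin> SR A" unfolding SR_def by simp
    hence "j \<notin> SR A'" using assms(2) by simp
    hence "rowc A' j < enat m" unfolding SR_def by (simp add: not_le)
    then obtain a' where a': "rowc A' j = enat a'" "a' < m" by (cases "rowc A' j") auto
    have "enat a \<le> enat a'" using 2 a' rowc_mono[OF assms(1), of j] by simp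
    thus ?thesis using MR_ge[OF a'] by simp
  qed simp
  have "Max (insert 0 {n. \<exists>j. rowc A j = enat n \<and> n < m}) \<le> MR A'"
    by (rule Max.boundedI[OF MR_fin]) (simp, rule le)
  thus ?thesis unfolding MR_def[of A] .
qed

lemma MC_mono: assumes "A \<subseteq> A'" "SC A' = SC A" shows "MC A \<le> MC A'"
proof -
  have le: "a \<le> MC A'" if a: "a \<in> insert 0 {n. \<exists>i. colc A i = enat n \<and> n < m}" for a
  proof (cases "a = 0")
    case False
    then obtain i where 2: "colc A i = enat a" "a < m" using a by blast
    hence "i \<notin> SC A" unfolding SC_def by simp
    hence "i \<notin> SC A'" using assms(2) by simp
    hence "colc A' i < enat m" unfolding SC_def by (simp add: not_le)
    then obtain a' where a': "colc A' i = enat a'" "a' < m" by (cases "colc A' i") auto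
    have "enat a \<le> enat a'" using 2 a' colc_mono[OF assms(1), of i] by simp
    thus ?thesis using MC_ge[OF a'] by simp
  qed simp
  have "Max (insert 0 {n. \<exists>i. colc A i = enat n \<and> n < m}) \<le> MC A'"
    by (rule Max.boundedI[OF MC_fin]) (simp, rule le)
  thus ?thesis unfolding MC_def[of A] .
qed

lemma card_eq_sets:
  assumes "finite B1" "finite B2" "finite B3" "finite B4"
    "A1 \<subseteq> B1" "A2 \<subseteq> B2" "A3 \<subseteq> B3" "A4 \<subseteq> B4"
    "card B1 + card B2 + card B3 + card B4 \<le> card A1 + card A2 + card A3 + card A4"
  shows "A1 = B1 \<and> A2 = B2 \<and> A3 = B3 \<and> A4 = B4"
proof -
  have "card A1 \<le> card B1" "card A2 \<le> card B2" "card A3 \<le> card B3" "card A4 \<le> card B4"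
    using assms by (auto intro: card_mono)
  hence "card A1 = card B1" "card A2 = card B2" "card A3 = card B3" "card A4 = card B4"
    using assms(9) by linarith+
  thus ?thesis using assms card_subset_eq by metis
qed

lemma step_small:
  assumes s: "small A" and s': "small (T_step Z A)" and ne: "T_step Z A \<noteq> A"
  shows "Phi0 A < Phi0 (T_step Z A)"
proof -
  let ?A' = "T_step Z A"
  have sub: "A \<subseteq> ?A'" by (rule T_sub)
  have fin: "finite (SR A)" "finite (SC A)" "finite (SR ?A')" "finite (SC ?A')"
    "finite (FR A)" "finite (FC A)" "finite (FR ?A')" "finite (FC ?A')"
    using s s' FR_SR FC_SC finite_subset unfolding small_def by meson+
  have c1le: "c1 A \<le> c1 ?A'"
    unfolding c1_def using fin SR_mono[OF sub] SC_mono[OF sub] FR_mono[OF sub] FC_mono[OF sub]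
    by (intro add_mono card_mono) auto
  show ?thesis
  proof (cases "c1 A < c1 ?A'")
    case True
    show ?thesis unfolding Phi0_def
      by (rule lex) (use True inner_less c3_less in auto)
  next
    case False
    hence "c1 ?A' \<le> c1 A" by simp
    hence eqs: "SR A = SR ?A' \<and> FR A = FR ?A' \<and> SC A = SC ?A' \<and> FC A = FC ?A'"
      unfolding c1_def using fin SR_mono[OF sub] SC_mono[OF sub] FR_mono[OF sub] FC_mono[OF sub]
      by (intro card_eq_sets) auto
    have c1eq: "c1 ?A' = c1 A" using eqs unfolding c1_def by simp
    have SRFR: "SR A \<subseteq> FR A"
    proof
      fix j assume "j \<in> SR A"
      hence "j \<in> FR ?A'" unfolding FR_def using SR_T by auto
      thus "j \<in> FR A" using eqs by simp
    qed
    have SCFC: "SC A \<subseteq> FC A"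
    proof
      fix i assume "i \<in> SC A"
      hence "i \<in> FC ?A'" unfolding FC_def using SC_T by auto
      thus "i \<in> FC A" using eqs by simp
    qed
    obtain i j where x: "(i, j) \<in> ?A'" "(i, j) \<notin> A" using ne sub by auto
    have "j \<notin> FR A" "i \<notin> FC A" using x unfolding FR_def FC_def by auto
    hence "j \<notin> SR A" "i \<notin> SC A" using SRFR SCFC by auto
    hence rl: "rowc A j < enat m" and cl: "colc A i < enat m" unfolding SR_def SC_def by auto
    then obtain r c where rc: "rowc A j = enat r" "r < m" "colc A i = enat c" "c < m"
      by (cases "rowc A j"; cases "colc A i") auto
    have nz: "\<not> in_zero Z (rowc A j) (colc A i)" using x T_mem by auto
    have iW: "i \<in> WW A"
      unfolding WW_def using cl nz iz_down[of "enat (MR A)" "colc A i" "rowc A j" "colc A i"]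
        MR_ge[OF rc(1,2)] rc by auto
    have jV: "j \<in> VV A"
      unfolding VV_def using rl nz iz_down[of "rowc A j" "enat (MC A)" "rowc A j" "colc A i"]
        MC_ge[OF rc(3,4)] rc by auto
    obtain j0 where j0: "rowc A j0 = enat (MR A)" "MR A < m" using MR_att[OF rc(1,2)] by blast
    obtain i0 where i0: "colc A i0 = enat (MC A)" "MC A < m" using MC_att[OF rc(3,4)] by blast
    have Wfin: "finite (WW A) \<and> card (WW A) < m"
    proof -
      have "j0 \<notin> SR A" using j0 unfolding SR_def by simp
      hence "j0 \<notin> SR ?A'" using eqs by simp
      hence "ecount {y \<in> ?A'. snd y = j0} < enat m" unfolding SR_def rowc_def by auto
      hence F: "finite {y \<in> ?A'. snd y = j0} \<and> card {y \<in> ?A'. snd y = j0} < m" by (rule ecount_less)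
      have im: "(\<lambda>i. (i, j0)) ` WW A \<subseteq> {y \<in> ?A'. snd y = j0}"
      proof safe
        fix i assume "i \<in> WW A"
        thus "(i, j0) \<in> ?A'" using T_mem[of "(i, j0)" Z A] j0 unfolding WW_def by auto
      qed simp
      have inj: "inj_on (\<lambda>i. (i, j0)) (WW A)" by (auto simp: inj_on_def)
      have "finite ((\<lambda>i. (i, j0)) ` WW A)" using F im finite_subset by blast
      hence f: "finite (WW A)" using inj finite_image_iff by blast
      have "card ((\<lambda>i. (i, j0)) ` WW A) \<le> card {y \<in> ?A'. snd y = j0}"
        using F im by (intro card_mono) auto
      thus ?thesis using f F card_image[OF inj] by simp
    qed
    have Vfin: "finite (VV A) \<and> card (VV A) < m"
    proof -
      have "i0 \<notin> SC A" using i0 unfolding SC_def by simp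
      hence "i0 \<notin> SC ?A'" using eqs by simp
      hence "ecount {y \<in> ?A'. fst y = i0} < enat m" unfolding SC_def colc_def by auto
      hence F: "finite {y \<in> ?A'. fst y = i0} \<and> card {y \<in> ?A'. fst y = i0} < m" by (rule ecount_less)
      have im: "(\<lambda>j. (i0, j)) ` VV A \<subseteq> {y \<in> ?A'. fst y = i0}"
      proof safe
        fix j assume "j \<in> VV A"
        thus "(i0, j) \<in> ?A'" using T_mem[of "(i0, j)" Z A] i0 unfolding VV_def by auto
      qed simp
      have inj: "inj_on (\<lambda>j. (i0, j)) (VV A)" by (auto simp: inj_on_def)
      have "finite ((\<lambda>j. (i0, j)) ` VV A)" using F im finite_subset by blast
      hence f: "finite (VV A)" using inj finite_image_iff by blast
      have "card ((\<lambda>j. (i0, j)) ` VV A) \<le> card {y \<in> ?A'. fst y = i0}"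
        using F im by (intro card_mono) auto
      thus ?thesis using f F card_image[OF inj] by simp
    qed
    have gA: "good A" unfolding good_def using Wfin Vfin by auto
    have MRm: "MR A \<le> MR ?A'" using MR_mono[OF sub] eqs by simp
    have MCm: "MC A \<le> MC ?A'" using MC_mono[OF sub] eqs by simp
    have WWs: "WW A \<subseteq> WW ?A'"
    proof
      fix i assume i: "i \<in> WW A"
      hence "i \<notin> SC A" unfolding WW_def SC_def by auto
      hence "i \<notin> SC ?A'" using eqs by simp
      hence "colc ?A' i < enat m" unfolding SC_def by (simp add: not_le)
      moreover have "\<not> in_zero Z (enat (MR ?A')) (colc ?A' i)"
        using i iz_down[of "enat (MR ?A')" "colc ?A' i" "enat (MR A)" "colc A i"] MRm
          colc_mono[OF sub, of i] unfolding WW_def by auto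
      ultimately show "i \<in> WW ?A'" unfolding WW_def by auto
    qed
    have VVs: "VV A \<subseteq> VV ?A'"
    proof
      fix j assume j: "j \<in> VV A"
      hence "j \<notin> SR A" unfolding VV_def SR_def by auto
      hence "j \<notin> SR ?A'" using eqs by simp
      hence "rowc ?A' j < enat m" unfolding SR_def by (simp add: not_le)
      moreover have "\<not> in_zero Z (rowc ?A' j) (enat (MC ?A'))"
        using j iz_down[of "rowc ?A' j" "enat (MC ?A')" "rowc A j" "enat (MC A)"] MCm
          rowc_mono[OF sub, of j] unfolding VV_def by auto
      ultimately show "j \<in> VV ?A'" unfolding VV_def by auto
    qed
    have key: "c2 A < c2 ?A' \<or> (c2 A = c2 ?A' \<and> c3 A < c3 ?A')"
    proof (cases "good ?A'")
      case gA': True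
      have le1: "card (VV A) \<le> card (VV ?A')" "card (WW A) \<le> card (WW ?A')"
        using gA' VVs WWs unfolding good_def by (auto intro: card_mono)
      show ?thesis
      proof (cases "c2 A < c2 ?A'")
        case False
        hence "card (VV ?A') + card (WW ?A') \<le> card (VV A) + card (WW A)"
          using gA gA' unfolding c2_def by simp
        hence "card (VV A) = card (VV ?A')" "card (WW A) = card (WW ?A')" using le1 by linarith+
        hence VVe: "VV A = VV ?A'" and WWe: "WW A = WW ?A'"
          using card_subset_eq gA' VVs WWs unfolding good_def by metis+
        have c2e: "c2 A = c2 ?A'" unfolding c2_def using gA gA' VVe WWe by simp
        have bfin: "finite (WW A \<times> VV A)" using gA unfolding good_def by auto
        have "A \<inter> (WW A \<times> VV A) \<subset> ?A' \<inter> (WW A \<times> VV A)"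
          using sub x iW jV by auto
        hence "card (A \<inter> (WW A \<times> VV A)) < card (?A' \<inter> (WW A \<times> VV A))"
          using bfin by (intro psubset_card_mono) auto
        hence "c3 A < c3 ?A'" unfolding c3_def using gA gA' VVe WWe by simp
        thus ?thesis using c2e by simp
      qed simp
    next
      case False
      hence "c2 ?A' = 2 * m" unfolding c2_def by simp
      moreover have "c2 A < 2 * m" using gA unfolding c2_def good_def by simp
      ultimately show ?thesis by simp
    qed
    show ?thesis unfolding Phi0_def
      by (rule lex) (use key c1eq inner_less c3_less in auto)
  qed
qed

lemma Phi_step: assumes ne: "T_step Z A \<noteq> A" shows "Phi A < Phi (T_step Z A)"
proof -
  have nU: "A \<noteq> UNIV" using ne T_sub[of A Z] by auto
  show ?thesis
  proof (cases "L2 A")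
    case True
    thus ?thesis using L2_T[OF True] nU unfolding Phi_def by simp
  next
    case nL: False
    show ?thesis
    proof (cases "small A")
      case False
      hence "L2 (T_step Z A)" by (rule NS_T)
      thus ?thesis using nU nL False unfolding Phi_def by simp
    next
      case True
      have PA: "Phi A = Phi0 A" using nU nL True unfolding Phi_def by simp
      have "Phi0 A < BB" using Phi0_less[OF True] .
      moreover have "small (T_step Z A) \<Longrightarrow> Phi0 A < Phi0 (T_step Z A)"
        using step_small True ne by blast
      ultimately show ?thesis unfolding PA by (auto simp: Phi_def[of "T_step Z A"])
    qed
  qed
qed

lemma stab: "(T_step Z ^^ (BB + 3)) A = (T_step Z ^^ (BB + 2)) A"
proof -
  let ?f = "\<lambda>t. (T_step Z ^^ t) A"
  have ex: "\<exists>t0 \<le> BB + 2. ?f (Suc t0) = ?f t0"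
  proof (rule ccontr)
    assume "\<not> ?thesis"
    hence act: "\<And>t. t \<le> BB + 2 \<Longrightarrow> T_step Z (?f t) \<noteq> ?f t" by auto
    have "t \<le> BB + 3 \<Longrightarrow> t \<le> Phi (?f t)" for t
    proof (induction t)
      case (Suc t)
      hence "t \<le> Phi (?f t)" by simp
      moreover have "Phi (?f t) < Phi (T_step Z (?f t))" using act Suc.prems by (intro Phi_step) auto
      ultimately show ?case by simp
    qed simp
    hence "BB + 3 \<le> Phi (?f (BB + 3))" by simp
    thus False using Phi_le[of "?f (BB + 3)"] by simp
  qed
  then obtain t0 where t0: "t0 \<le> BB + 2" "?f (Suc t0) = ?f t0" by blast
  have "?f (t0 + k) = ?f t0" for k
  proof (induction k)
    case (Suc k)
    have "?f (t0 + Suc k) = T_step Z (?f (t0 + k))" by simp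
    also have "\<dots> = T_step Z (?f t0)" using Suc by simp
    also have "\<dots> = ?f t0" using t0(2) by simp
    finally show ?case .
  qed simp
  from this[of "BB + 3 - t0"] this[of "BB + 2 - t0"] t0(1) show ?thesis by simp
qed

end

theorem mainTheorem7:
  fixes Z :: "point set"
  assumes "zero_set Z" and "finite Z"
  shows "\<exists>Tmax::nat. \<forall>A :: point set.
           (T_step Z ^^ (Tmax + 1)) A = (T_step Z ^^ Tmax) A"
proof -
  obtain S where S: "Z = (\<Union>(a, b)\<in>S. rect a b)" using assms(1) unfolding zero_set_def by blast
  have "finite (fst ` Z \<union> snd ` Z)" using assms(2) by simp
  hence "\<exists>m. \<forall>x\<in>fst ` Z \<union> snd ` Z. x < m" by (simp only: finite_nat_set_iff_bounded)
  then obtain m where m: "\<forall>x\<in>fst ` Z \<union> snd ` Z. x < m" by blast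
  interpret ctx Z m
  proof
    fix a b a' b'
    assume ab: "(a, b) \<in> Z" "a' \<le> a" "b' \<le> b"
    from ab(1) obtain p where p: "p \<in> S" "(a, b) \<in> rect (fst p) (snd p)"
      unfolding S by (auto simp: case_prod_beta)
    hence "(a', b') \<in> rect (fst p) (snd p)" using ab(2,3) unfolding rect_def by auto
    thus "(a', b') \<in> Z" unfolding S using p(1) by (auto simp: case_prod_beta)
  next
    fix a b assume ab: "(a, b) \<in> Z"
    have "a \<in> fst ` Z" using ab by force
    moreover have "b \<in> snd ` Z" using ab by force
    ultimately show "a < m \<and> b < m" using m by simp
  qed
  show ?thesis
    by (rule exI[of _ "BB + 2"]) (use stab in \<open>simp add: numeral_3_eq_3\<close>)
qed

end
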